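(* Let $(Q,\cdot)$ be a quasigroup. Then $Q$ satisfies the identity $x(y(zx))=(x(yz))x$ for all $x,y,z\in Q$ if and only if $Q$ satisfies the identity $x(y(zz))=(x(yz))z$ for all $x,y,z\in Q$.
   Context: A quasigroup is a set $Q$ with a binary operation $\cdot$ (written as juxtaposition) such that for all $a,b\in Q$ each of the equations $ax=b$ and $ya=b$ has a unique solution in $Q$. *)

theory Defs
  imports Main
begin

definition quasigroup :: "'a set \<Rightarrow> ('a \<Rightarrow> 'a \<Rightarrow> 'a) \<Rightarrow> bool" where
  "quasigroup Q m \<longleftrightarrow>
     (\<forall>a\<in>Q. \<forall>b\<in>Q. m a b \<in> Q) \<and>
     (\<forall>a\<in>Q. \<forall>b\<in>Q. (\<exists>!x. x \<in> Q \<and> m a x = b) \<and> (\<exists>!y. y \<in> Q \<and> m y a = b))"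

end

theory Submission
  imports Defs
begin

lemma A_assoc:
  fixes Q :: "'a set" and m ld rd :: "'a \<Rightarrow> 'a \<Rightarrow> 'a"
  assumes cm: "\<And>x y. x \<in> Q \<Longrightarrow> y \<in> Q \<Longrightarrow> m x y \<in> Q"
    and cl: "\<And>x y. x \<in> Q \<Longrightarrow> y \<in> Q \<Longrightarrow> ld x y \<in> Q"
    and cr: "\<And>x y. x \<in> Q \<Longrightarrow> y \<in> Q \<Longrightarrow> rd x y \<in> Q"
    and a1: "\<And>x y. x \<in> Q \<Longrightarrow> y \<in> Q \<Longrightarrow> ld x (m x y) = y"
    and a2: "\<And>x y. x \<in> Q \<Longrightarrow> y \<in> Q \<Longrightarrow> m x (ld x y) = y"
    and a3: "\<And>x y. x \<in> Q \<Longrightarrow> y \<in> Q \<Longrightarrow> rd (m x y) y = x"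
    and a4: "\<And>x y. x \<in> Q \<Longrightarrow> y \<in> Q \<Longrightarrow> m (rd x y) y = x"
    and h: "\<And>x y z. x \<in> Q \<Longrightarrow> y \<in> Q \<Longrightarrow> z \<in> Q \<Longrightarrow> m x (m y (m z x)) = m (m x (m y z)) x"
  shows "\<And>a b c d. a \<in> Q \<Longrightarrow> b \<in> Q \<Longrightarrow> c \<in> Q \<Longrightarrow> d \<in> Q \<Longrightarrow> m (m a (m b c)) d = m a (m b (m c d))"
proof -
  have s23: "(m x2 (m x0 (m (ld x0 x1) x2))) = (m (m x2 x1) x2)" if "x0 \<in> Q" "x1 \<in> Q" "x2 \<in> Q" for x0 x1 x2
    using that by (metis h a2 cm cl cr)
  have s39: "(m x11 (m (ld x11 x12) x10)) = (ld x10 (m (m x10 x12) x10))" if "x10 \<in> Q" "x11 \<in> Q" "x12 \<in> Q" for x10 x11 x12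
    using that by (metis a1 s23 cm cl cr)
  have s180: "(m x3 (m (ld x3 (m x1 x2)) x0)) = (ld x0 (m x0 (m x1 (m x2 x0))))" if "x0 \<in> Q" "x1 \<in> Q" "x2 \<in> Q" "x3 \<in> Q" for x0 x1 x2 x3
    using that by (metis s39 h cm cl cr)
  have s219: "(m x1 (m x2 x0)) = (m x3 (m (ld x3 (m x1 x2)) x0))" if "x0 \<in> Q" "x1 \<in> Q" "x2 \<in> Q" "x3 \<in> Q" for x0 x1 x2 x3
    using that by (metis s180 a1 cm cl cr)
  have s46735: "(m x37 (m (ld x37 (m x38 x39)) (m x40 x37))) = (m (m x38 (m x39 x40)) x37)" if "x37 \<in> Q" "x38 \<in> Q" "x39 \<in> Q" "x40 \<in> Q" for x37 x38 x39 x40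
    using that by (metis h s219 cm cl cr)
  have s47762: "(m (m x38 (m x39 x40)) x37) = (m x38 (m x39 (m x40 x37)))" if "x37 \<in> Q" "x38 \<in> Q" "x39 \<in> Q" "x40 \<in> Q" for x37 x38 x39 x40
    using that by (metis s46735 s219 cm cl cr)
  show "\<And>a b c d. a \<in> Q \<Longrightarrow> b \<in> Q \<Longrightarrow> c \<in> Q \<Longrightarrow> d \<in> Q \<Longrightarrow> m (m a (m b c)) d = m a (m b (m c d))" by (rule s47762)
qed

lemma B_assoc:
  fixes Q :: "'a set" and m ld rd :: "'a \<Rightarrow> 'a \<Rightarrow> 'a"
  assumes cm: "\<And>x y. x \<in> Q \<Longrightarrow> y \<in> Q \<Longrightarrow> m x y \<in> Q"
    and cl: "\<And>x y. x \<in> Q \<Longrightarrow> y \<in> Q \<Longrightarrow> ld x y \<in> Q"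
    and cr: "\<And>x y. x \<in> Q \<Longrightarrow> y \<in> Q \<Longrightarrow> rd x y \<in> Q"
    and a1: "\<And>x y. x \<in> Q \<Longrightarrow> y \<in> Q \<Longrightarrow> ld x (m x y) = y"
    and a2: "\<And>x y. x \<in> Q \<Longrightarrow> y \<in> Q \<Longrightarrow> m x (ld x y) = y"
    and a3: "\<And>x y. x \<in> Q \<Longrightarrow> y \<in> Q \<Longrightarrow> rd (m x y) y = x"
    and a4: "\<And>x y. x \<in> Q \<Longrightarrow> y \<in> Q \<Longrightarrow> m (rd x y) y = x"
    and h: "\<And>x y z. x \<in> Q \<Longrightarrow> y \<in> Q \<Longrightarrow> z \<in> Q \<Longrightarrow> m x (m y (m z z)) = m (m x (m y z)) z"
  shows "\<And>a b c d. a \<in> Q \<Longrightarrow> b \<in> Q \<Longrightarrow> c \<in> Q \<Longrightarrow> d \<in> Q \<Longrightarrow> m (m a (m b c)) d = m a (m b (m c d))"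
proof -
  have s17: "(rd x1 (ld x0 x1)) = x0" if "x0 \<in> Q" "x1 \<in> Q" for x0 x1
    using that by (metis a3 a2 cm cl cr)
  have s18: "(ld (rd x2 x3) x2) = x3" if "x2 \<in> Q" "x3 \<in> Q" for x2 x3
    using that by (metis a1 a4 cm cl cr)
  have s23: "(m x2 (m x0 (m (ld x0 x1) (ld x0 x1)))) = (m (m x2 x1) (ld x0 x1))" if "x0 \<in> Q" "x1 \<in> Q" "x2 \<in> Q" for x0 x1 x2
    using that by (metis h a2 cm cl cr)
  have s24: "(m x5 (m (rd x3 x4) (m x4 x4))) = (m (m x5 x3) x4)" if "x3 \<in> Q" "x4 \<in> Q" "x5 \<in> Q" for x3 x4 x5
    using that by (metis h a4 cm cl cr)
  have s26: "(m (rd x0 (m x1 x2)) (m x1 (m x2 x2))) = (m x0 x2)" if "x0 \<in> Q" "x1 \<in> Q" "x2 \<in> Q" for x0 x1 x2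
    using that by (metis h a4 cm cl cr)
  have s28: "(m x0 (m x1 x2)) = (rd (m x0 (m x1 (m x2 x2))) x2)" if "x0 \<in> Q" "x1 \<in> Q" "x2 \<in> Q" for x0 x1 x2
    using that by (metis a3 h cm cl cr)
  have s37: "(rd (m (m x7 x8) x9) (m (rd x8 x9) (m x9 x9))) = x7" if "x7 \<in> Q" "x8 \<in> Q" "x9 \<in> Q" for x7 x8 x9
    using that by (metis a3 s24 cm cl cr)
  have s38: "(m (rd x11 x12) (m x12 x12)) = (ld x10 (m (m x10 x11) x12))" if "x10 \<in> Q" "x11 \<in> Q" "x12 \<in> Q" for x10 x11 x12
    using that by (metis a1 s24 cm cl cr)
  have s50: "(m x9 x8) = (m (rd x9 x7) (m (rd x7 x8) (m x8 x8)))" if "x7 \<in> Q" "x8 \<in> Q" "x9 \<in> Q" for x7 x8 x9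
    using that by (metis s26 a4 cm cl cr)
  have s56: "(m x5 x4) = (m (rd x5 (m (rd x3 (m x4 x4)) x4)) x3)" if "x3 \<in> Q" "x4 \<in> Q" "x5 \<in> Q" for x3 x4 x5
    using that by (metis s26 a4 cm cl cr)
  have s62: "(rd x10 (m x11 x12)) = (rd (m x10 x12) (m x11 (m x12 x12)))" if "x10 \<in> Q" "x11 \<in> Q" "x12 \<in> Q" for x10 x11 x12
    using that by (metis a3 s26 cm cl cr)
  have s72: "(m x5 (m (rd x3 (m x4 x4)) x4)) = (rd (m x5 x3) x4)" if "x3 \<in> Q" "x4 \<in> Q" "x5 \<in> Q" for x3 x4 x5
    using that by (metis s28 a4 cm cl cr)
  have s76: "(m (rd x6 (m x7 (m x8 x8))) (m x7 x8)) = (rd x6 x8)" if "x6 \<in> Q" "x7 \<in> Q" "x8 \<in> Q" for x6 x7 x8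
    using that by (metis s28 a4 cm cl cr)
  have s179: "(m (m x26 x27) (m x24 (m (ld x24 x25) (ld x24 x25)))) = (m x26 (m (rd x27 (m x24 (m (ld x24 x25) (ld x24 x25)))) (m (m (m x24 (m (ld x24 x25) (ld x24 x25))) x25) (ld x24 x25))))" if "x24 \<in> Q" "x25 \<in> Q" "x26 \<in> Q" "x27 \<in> Q" for x24 x25 x26 x27
    using that by (metis s24 s23 cm cl cr)
  have s200: "(m x26 (m (rd x27 (m x24 (m (ld x24 x25) (ld x24 x25)))) (m (m (m x24 (m (ld x24 x25) (ld x24 x25))) x25) (ld x24 x25)))) = (m (m (m x26 x27) x25) (ld x24 x25))" if "x24 \<in> Q" "x25 \<in> Q" "x26 \<in> Q" "x27 \<in> Q" for x24 x25 x26 x27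
    using that by (metis s179 s23 cm cl cr)
  have s213: "(rd x11 x12) = (rd (m x11 x13) (m (rd x12 x13) (m x13 x13)))" if "x11 \<in> Q" "x12 \<in> Q" "x13 \<in> Q" for x11 x12 x13
    using that by (metis s37 a4 cm cl cr)
  have s310: "(m (rd (ld x0 x1) x2) (m x2 x2)) = (ld x0 (m x1 x2))" if "x0 \<in> Q" "x1 \<in> Q" "x2 \<in> Q" for x0 x1 x2
    using that by (metis s38 a2 cm cl cr)
  have s313: "(m (rd x12 x13) (m x13 x13)) = (ld (rd x11 x12) (m x11 x13))" if "x11 \<in> Q" "x12 \<in> Q" "x13 \<in> Q" for x11 x12 x13
    using that by (metis s38 a4 cm cl cr)
  have s323: "(m (m x7 x4) x5) = (m x7 (ld x6 (m (m x6 x4) x5)))" if "x4 \<in> Q" "x5 \<in> Q" "x6 \<in> Q" "x7 \<in> Q" for x4 x5 x6 x7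
    using that by (metis s24 s38 cm cl cr)
  have s329: "(m x30 x28) = (m (rd x30 (m (rd x27 x28) x28)) (ld x29 (m (m x29 x27) x28)))" if "x27 \<in> Q" "x28 \<in> Q" "x29 \<in> Q" "x30 \<in> Q" for x27 x28 x29 x30
    using that by (metis s26 s38 cm cl cr)
  have s360: "(m x30 x28) = (m (rd x30 x27) (ld x29 (m (m x29 x27) x28)))" if "x27 \<in> Q" "x28 \<in> Q" "x29 \<in> Q" "x30 \<in> Q" for x27 x28 x29 x30
    using that by (metis s329 a4 cm cl cr)
  have s509: "(rd x3 (m (rd x4 (m x5 x5)) x5)) = (rd (m x3 x5) x4)" if "x3 \<in> Q" "x4 \<in> Q" "x5 \<in> Q" for x3 x4 x5
    using that by (metis a3 s56 cm cl cr)
  have s579: "(rd (rd x11 x12) (m x13 x12)) = (rd x11 (m x13 (m x12 x12)))" if "x11 \<in> Q" "x12 \<in> Q" "x13 \<in> Q" for x11 x12 x13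
    using that by (metis s62 a4 cm cl cr)
  have s690: "(m (rd x62 (m x63 x63)) x63) = (ld x61 (rd (m x61 x62) x63))" if "x61 \<in> Q" "x62 \<in> Q" "x63 \<in> Q" for x61 x62 x63
    using that by (metis a1 s72 cm cl cr)
  have s834: "(m (rd (m x81 x82) x83) (m x83 x83)) = (ld (rd x80 (m x81 (m x82 x82))) (m (rd x80 x82) x83))" if "x80 \<in> Q" "x81 \<in> Q" "x82 \<in> Q" "x83 \<in> Q" for x80 x81 x82 x83
    using that by (metis s38 s76 cm cl cr)
  have s1365: "(m (m x19 (ld x16 x17)) x18) = (m x19 (ld x16 (m x17 x18)))" if "x16 \<in> Q" "x17 \<in> Q" "x18 \<in> Q" "x19 \<in> Q" for x16 x17 x18 x19
    using that by (metis s24 s310 cm cl cr)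
  have s2262: "(m (m x52 (m x50 x51)) x53) = (m x52 (ld (rd x49 (m x50 (m x51 x51))) (m (rd x49 x51) x53)))" if "x49 \<in> Q" "x50 \<in> Q" "x51 \<in> Q" "x52 \<in> Q" "x53 \<in> Q" for x49 x50 x51 x52 x53
    using that by (metis s323 s76 cm cl cr)
  have s3348: "(m x17 (ld (m x14 x15) x16)) = (m (rd x17 x15) (ld x14 x16))" if "x14 \<in> Q" "x15 \<in> Q" "x16 \<in> Q" "x17 \<in> Q" for x14 x15 x16 x17
    using that by (metis s360 a2 cm cl cr)
  have s4463: "(rd x2 (m x0 (m (ld x0 x1) (ld x0 x1)))) = (rd (rd x2 (ld x0 x1)) x1)" if "x0 \<in> Q" "x1 \<in> Q" "x2 \<in> Q" for x0 x1 x2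
    using that by (metis s579 a2 cm cl cr)
  have s4527: "(m (m (m x26 x27) x25) (ld x24 x25)) = (m x26 (m (rd (rd x27 (ld x24 x25)) x25) (m (m (m x24 (m (ld x24 x25) (ld x24 x25))) x25) (ld x24 x25))))" if "x24 \<in> Q" "x25 \<in> Q" "x26 \<in> Q" "x27 \<in> Q" for x24 x25 x26 x27
    using that by (metis s200 s4463 cm cl cr)
  have s5677: "(m (rd (ld x0 x1) (m x2 x2)) x2) = (ld x0 (rd x1 x2))" if "x0 \<in> Q" "x1 \<in> Q" "x2 \<in> Q" for x0 x1 x2
    using that by (metis s690 a2 cm cl cr)
  have s5704: "(m (rd x1 (m x1 x1)) x1) = (ld x0 x0)" if "x0 \<in> Q" "x1 \<in> Q" for x0 x1
    using that by (metis s690 a3 cm cl cr)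
  have s6128: "(rd (m x5 x3) x3) = (rd x5 (ld x4 x4))" if "x3 \<in> Q" "x4 \<in> Q" "x5 \<in> Q" for x3 x4 x5
    using that by (metis s509 s5704 cm cl cr)
  have s6129: "(rd (m x8 x6) x6) = (m x8 (ld x7 x7))" if "x6 \<in> Q" "x7 \<in> Q" "x8 \<in> Q" for x6 x7 x8
    using that by (metis s72 s5704 cm cl cr)
  have s6130: "(ld (rd x9 (m x9 x9)) (ld x10 x10)) = x9" if "x9 \<in> Q" "x10 \<in> Q" for x9 x10
    using that by (metis a1 s5704 cm cl cr)
  have s6131: "(rd x11 (m x11 x11)) = (rd (ld x12 x12) x11)" if "x11 \<in> Q" "x12 \<in> Q" for x11 x12
    using that by (metis a3 s5704 cm cl cr)
  have s6224: "(rd x5 (ld x4 x4)) = x5" if "x4 \<in> Q" "x5 \<in> Q" for x4 x5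
    using that by (metis s6128 a3 cm cl cr)
  have s6225: "(m x8 (ld x7 x7)) = x8" if "x7 \<in> Q" "x8 \<in> Q" for x7 x8
    using that by (metis s6129 a3 cm cl cr)
  have s7754: "(ld x4 x4) = (rd (ld x3 x3) (m (ld x3 x3) (ld x3 x3)))" if "x3 \<in> Q" "x4 \<in> Q" for x3 x4
    using that by (metis s6225 s5704 cm cl cr)
  have s7861: "(ld x4 x4) = (rd (ld x3 x3) (ld x3 x3))" if "x3 \<in> Q" "x4 \<in> Q" for x3 x4
    using that by (metis s7754 s6225 cm cl cr)
  have s8931: "(rd (ld x1 x1) x0) = (rd (ld x2 x2) x0)" if "x0 \<in> Q" "x1 \<in> Q" "x2 \<in> Q" for x0 x1 x2
    using that by (metis s6131 s6131 cm cl cr)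
  have s14206: "(m (ld x32 x32) x34) = (m (ld x33 x33) (m (rd (ld x32 x32) x34) (m x34 x34)))" if "x32 \<in> Q" "x33 \<in> Q" "x34 \<in> Q" for x32 x33 x34
    using that by (metis s50 s7861 cm cl cr)
  have s14283: "(m (ld x32 x32) x34) = (m (ld x33 x33) (ld x32 (m x32 x34)))" if "x32 \<in> Q" "x33 \<in> Q" "x34 \<in> Q" for x32 x33 x34
    using that by (metis s14206 s310 cm cl cr)
  have s14284: "(m (ld x32 x32) x34) = (m (ld x33 x33) x34)" if "x32 \<in> Q" "x33 \<in> Q" "x34 \<in> Q" for x32 x33 x34
    using that by (metis s14283 a1 cm cl cr)
  have s16141: "(rd (m x149 x147) (ld x146 x146)) = (rd x149 (m (rd (ld x148 x148) (m x147 x147)) x147))" if "x146 \<in> Q" "x147 \<in> Q" "x148 \<in> Q" "x149 \<in> Q" for x146 x147 x148 x149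
    using that by (metis s509 s8931 cm cl cr)
  have s16278: "(rd (m x149 x147) (ld x146 x146)) = (rd x149 (ld x148 (rd x148 x147)))" if "x146 \<in> Q" "x147 \<in> Q" "x148 \<in> Q" "x149 \<in> Q" for x146 x147 x148 x149
    using that by (metis s16141 s5677 cm cl cr)
  have s16279: "(m x149 x147) = (rd x149 (ld x148 (rd x148 x147)))" if "x147 \<in> Q" "x148 \<in> Q" "x149 \<in> Q" for x147 x148 x149
    using that by (metis s16278 s6224 cm cl cr)
  have s26370: "(m (ld x20 x20) (ld (ld x18 x18) x19)) = x19" if "x18 \<in> Q" "x19 \<in> Q" "x20 \<in> Q" for x18 x19 x20
    using that by (metis s14284 a2 cm cl cr)
  have s31842: "(rd x2 (ld x0 x1)) = (m x2 (ld x1 x0))" if "x0 \<in> Q" "x1 \<in> Q" "x2 \<in> Q" for x0 x1 x2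
    using that by (metis s16279 s17 cm cl cr)
  have s31927: "(m (m (m x26 x27) x25) (ld x24 x25)) = (m x26 (m (rd (m x27 (ld x25 x24)) x25) (m (m (m x24 (m (ld x24 x25) (ld x24 x25))) x25) (ld x24 x25))))" if "x24 \<in> Q" "x25 \<in> Q" "x26 \<in> Q" "x27 \<in> Q" for x24 x25 x26 x27
    using that by (metis s4527 s31842 cm cl cr)
  have s32442: "(m (m (m x154 x155) (ld x153 x153)) x152) = (m x154 (m (rd (m x155 (ld (ld x153 x153) (rd x152 (m x152 x152)))) (ld x153 x153)) (m (m (m (rd x152 (m x152 x152)) (m x152 x152)) (ld x153 x153)) x152)))" if "x152 \<in> Q" "x153 \<in> Q" "x154 \<in> Q" "x155 \<in> Q" for x152 x153 x154 x155
    using that by (metis s31927 s6130 cm cl cr)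
  have s33061: "(m (m (m x154 x155) (ld x153 x153)) x152) = (m x154 (m (rd (m x155 (ld (ld x153 x153) (rd x152 (m x152 x152)))) (ld x153 x153)) (m (m (rd x152 (m x152 x152)) (m x152 x152)) (ld x153 (m x153 x152)))))" if "x152 \<in> Q" "x153 \<in> Q" "x154 \<in> Q" "x155 \<in> Q" for x152 x153 x154 x155
    using that by (metis s32442 s1365 cm cl cr)
  have s33062: "(m (m (m x154 x155) (ld x153 x153)) x152) = (m x154 (m (rd (m x155 (ld (ld x153 x153) (rd x152 (m x152 x152)))) (ld x153 x153)) (m (m (rd x152 (m x152 x152)) (m x152 x152)) x152)))" if "x152 \<in> Q" "x153 \<in> Q" "x154 \<in> Q" "x155 \<in> Q" for x152 x153 x154 x155
    using that by (metis s33061 a1 cm cl cr)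
  have s33063: "(m (m (m x154 x155) (ld x153 x153)) x152) = (m x154 (m (rd (m x155 (ld (ld x153 x153) (rd x152 (m x152 x152)))) (ld x153 x153)) (m (rd x152 (m x152 x152)) (m x152 (m x152 x152)))))" if "x152 \<in> Q" "x153 \<in> Q" "x154 \<in> Q" "x155 \<in> Q" for x152 x153 x154 x155
    using that by (metis s33062 h cm cl cr)
  have s33064: "(m (m (m x154 x155) (ld x153 x153)) x152) = (m x154 (m (rd (m x155 (ld (ld x153 x153) (rd x152 (m x152 x152)))) (ld x153 x153)) (m x152 x152)))" if "x152 \<in> Q" "x153 \<in> Q" "x154 \<in> Q" "x155 \<in> Q" for x152 x153 x154 x155
    using that by (metis s33063 s26 cm cl cr)
  have s33065: "(m (m (m x154 x155) (ld x153 x153)) x152) = (m x154 (m (m x155 (ld (ld x153 x153) (rd x152 (m x152 x152)))) (m x152 x152)))" if "x152 \<in> Q" "x153 \<in> Q" "x154 \<in> Q" "x155 \<in> Q" for x152 x153 x154 x155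
    using that by (metis s33064 s6224 cm cl cr)
  have s33066: "(m (m (m x154 x155) (ld x153 x153)) x152) = (m x154 (m x155 (ld (ld x153 x153) (m (rd x152 (m x152 x152)) (m x152 x152)))))" if "x152 \<in> Q" "x153 \<in> Q" "x154 \<in> Q" "x155 \<in> Q" for x152 x153 x154 x155
    using that by (metis s33065 s1365 cm cl cr)
  have s33067: "(m (m (m x154 x155) (ld x153 x153)) x152) = (m x154 (m x155 (ld (ld x153 x153) x152)))" if "x152 \<in> Q" "x153 \<in> Q" "x154 \<in> Q" "x155 \<in> Q" for x152 x153 x154 x155
    using that by (metis s33066 a4 cm cl cr)
  have s33068: "(m (m x154 x155) x152) = (m x154 (m x155 (ld (ld x153 x153) x152)))" if "x152 \<in> Q" "x153 \<in> Q" "x154 \<in> Q" "x155 \<in> Q" for x152 x153 x154 x155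
    using that by (metis s33067 s6225 cm cl cr)
  have s61651: "(rd (ld x180 x180) x183) = (rd x182 (m (rd x183 (ld (ld x181 x181) x182)) (m (ld (ld x181 x181) x182) (ld (ld x181 x181) x182))))" if "x180 \<in> Q" "x181 \<in> Q" "x182 \<in> Q" "x183 \<in> Q" for x180 x181 x182 x183
    using that by (metis s213 s26370 cm cl cr)
  have s61816: "(rd (ld x180 x180) x183) = (rd x182 (m (m (rd x183 (ld (ld x181 x181) x182)) (ld (ld x181 x181) x182)) x182))" if "x180 \<in> Q" "x181 \<in> Q" "x182 \<in> Q" "x183 \<in> Q" for x180 x181 x182 x183
    using that by (metis s61651 s33068 cm cl cr)
  have s61817: "(rd (ld x180 x180) x183) = (rd x182 (m (rd x183 (ld (ld x181 x181) x182)) (ld (ld x181 x181) (m x182 x182))))" if "x180 \<in> Q" "x181 \<in> Q" "x182 \<in> Q" "x183 \<in> Q" for x180 x181 x182 x183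
    using that by (metis s61816 s1365 cm cl cr)
  have s61818: "(rd (ld x180 x180) x183) = (rd x182 (m x183 (ld (m (ld x181 x181) (ld (ld x181 x181) x182)) (m x182 x182))))" if "x180 \<in> Q" "x181 \<in> Q" "x182 \<in> Q" "x183 \<in> Q" for x180 x181 x182 x183
    using that by (metis s61817 s3348 cm cl cr)
  have s61819: "(rd (ld x180 x180) x183) = (rd x182 (m x183 (ld x182 (m x182 x182))))" if "x180 \<in> Q" "x182 \<in> Q" "x183 \<in> Q" for x180 x182 x183
    using that by (metis s61818 a2 cm cl cr)
  have s61820: "(rd x182 (m x183 x182)) = (rd (ld x180 x180) x183)" if "x180 \<in> Q" "x182 \<in> Q" "x183 \<in> Q" for x180 x182 x183
    using that by (metis s61819 a1 cm cl cr)
  have s68319: "(m x112 x111) = (ld (rd (ld x113 x113) x112) x111)" if "x111 \<in> Q" "x112 \<in> Q" "x113 \<in> Q" for x111 x112 x113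
    using that by (metis s18 s61820 cm cl cr)
  have s68329: "(m (rd (m x153 x152) x155) (m x155 x155)) = (ld (rd (ld x154 x154) x153) (m x152 x155))" if "x152 \<in> Q" "x153 \<in> Q" "x154 \<in> Q" "x155 \<in> Q" for x152 x153 x154 x155
    using that by (metis s313 s61820 cm cl cr)
  have s72516: "(m (rd (m x153 x152) x155) (m x155 x155)) = (m x153 (m x152 x155))" if "x152 \<in> Q" "x153 \<in> Q" "x155 \<in> Q" for x152 x153 x155
    using that by (metis s68329 s68319 cm cl cr)
  have s72521: "(ld (rd x80 (m x81 (m x82 x82))) (m (rd x80 x82) x83)) = (m x81 (m x82 x83))" if "x80 \<in> Q" "x81 \<in> Q" "x82 \<in> Q" "x83 \<in> Q" for x80 x81 x82 x83
    using that by (metis s834 s72516 cm cl cr)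
  have s74497: "(m (m x52 (m x50 x51)) x53) = (m x52 (m x50 (m x51 x53)))" if "x50 \<in> Q" "x51 \<in> Q" "x52 \<in> Q" "x53 \<in> Q" for x50 x51 x52 x53
    using that by (metis s2262 s72521 cm cl cr)
  show "\<And>a b c d. a \<in> Q \<Longrightarrow> b \<in> Q \<Longrightarrow> c \<in> Q \<Longrightarrow> d \<in> Q \<Longrightarrow> m (m a (m b c)) d = m a (m b (m c d))" by (rule s74497)
qed

theorem mainTheorem2:
  fixes Q :: "'a set" and m :: "'a \<Rightarrow> 'a \<Rightarrow> 'a"
  assumes "quasigroup Q m"
  shows "(\<forall>x\<in>Q. \<forall>y\<in>Q. \<forall>z\<in>Q. m x (m y (m z x)) = m (m x (m y z)) x)
     \<longleftrightarrow> (\<forall>x\<in>Q. \<forall>y\<in>Q. \<forall>z\<in>Q. m x (m y (m z z)) = m (m x (m y z)) z)"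
proof -
  have cm: "\<And>x y. x \<in> Q \<Longrightarrow> y \<in> Q \<Longrightarrow> m x y \<in> Q"
    and u1: "\<And>a b. a \<in> Q \<Longrightarrow> b \<in> Q \<Longrightarrow> \<exists>!x. x \<in> Q \<and> m a x = b"
    and u2: "\<And>a b. a \<in> Q \<Longrightarrow> b \<in> Q \<Longrightarrow> \<exists>!y. y \<in> Q \<and> m y a = b"
    using assms unfolding quasigroup_def by blast+
  define ld where "ld a b = (THE x. x \<in> Q \<and> m a x = b)" for a b
  define rd where "rd b a = (THE y. y \<in> Q \<and> m y a = b)" for a b
  have ld: "ld a b \<in> Q \<and> m a (ld a b) = b" if "a \<in> Q" "b \<in> Q" for a b
    unfolding ld_def using theI'[OF u1[OF that]] .
  have rd: "rd b a \<in> Q \<and> m (rd b a) a = b" if "a \<in> Q" "b \<in> Q" for a b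
    unfolding rd_def using theI'[OF u2[OF that]] .
  have cl: "\<And>x y. x \<in> Q \<Longrightarrow> y \<in> Q \<Longrightarrow> ld x y \<in> Q" using ld by blast
  have cr: "\<And>x y. x \<in> Q \<Longrightarrow> y \<in> Q \<Longrightarrow> rd x y \<in> Q" using rd by blast
  have a2: "\<And>x y. x \<in> Q \<Longrightarrow> y \<in> Q \<Longrightarrow> m x (ld x y) = y" using ld by blast
  have a4: "\<And>x y. x \<in> Q \<Longrightarrow> y \<in> Q \<Longrightarrow> m (rd x y) y = x" using rd by blast
  have a1: "\<And>x y. x \<in> Q \<Longrightarrow> y \<in> Q \<Longrightarrow> ld x (m x y) = y"
    using ld u1 cm by metis
  have a3: "\<And>x y. x \<in> Q \<Longrightarrow> y \<in> Q \<Longrightarrow> rd (m x y) y = x"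
    using rd u2 cm by metis
  show ?thesis
  proof
    assume "\<forall>x\<in>Q. \<forall>y\<in>Q. \<forall>z\<in>Q. m x (m y (m z x)) = m (m x (m y z)) x"
    then have "m (m a (m b c)) d = m a (m b (m c d))" if "a \<in> Q" "b \<in> Q" "c \<in> Q" "d \<in> Q" for a b c d
      using A_assoc[of Q m ld rd, OF cm cl cr a1 a2 a3 a4] that by blast
    then show "\<forall>x\<in>Q. \<forall>y\<in>Q. \<forall>z\<in>Q. m x (m y (m z z)) = m (m x (m y z)) z" by simp
  next
    assume "\<forall>x\<in>Q. \<forall>y\<in>Q. \<forall>z\<in>Q. m x (m y (m z z)) = m (m x (m y z)) z"
    then have "m (m a (m b c)) d = m a (m b (m c d))" if "a \<in> Q" "b \<in> Q" "c \<in> Q" "d \<in> Q" for a b c d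
      using B_assoc[of Q m ld rd, OF cm cl cr a1 a2 a3 a4] that by blast
    then show "\<forall>x\<in>Q. \<forall>y\<in>Q. \<forall>z\<in>Q. m x (m y (m z x)) = m (m x (m y z)) x" by simp
  qed
qed

end
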